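(* For every graph $G$ on $n\ge 1$ vertices the following are equivalent: (a) $G$ belongs to CBU; (b) $G$ admits a homogeneous arc labeling; (c) $G$ is (isomorphic to) a subgraph of a graph $H_m^t$ obtained from the shift graph $H_m$ by iteratively adding $t$ false twins, for some values $m,t$ with $m+t\le n+1$; (d) $G$ belongs to $(2n-1)$-CBU.
   Context: Let $e_1,\ldots,e_d$ be the standard basis of $\mathbb{R}^d$. For $d\ge 1$, a graph belongs to $d$-CBU if one can assign to each vertex an axis-parallel box (product of $d$ closed intervals of positive length) in $\mathbb{R}^d$ such that the boxes have pairwise disjoint interiors, two distinct vertices are adjacent iff their boxes intersect, and any two intersecting boxes intersect in a $(d-1)$-dimensional box orthogonal to $e_1$. CBU is the union of $d$-CBU over all $d\ge 1$. A homogeneous arc labeling of $G$ is an acyclic orientation of $G$ together with a real label on each arc such that for every vertex all its outgoing arcs have the same label, all its incoming arcs have the same label, and the label of its incoming arcs is smaller than the label of its outgoing arcs. The shift graph $H_m$ has vertices the pairs $(i,j)$ with $1\le i<j\le m$, with $(i,j)$ and $(k,l)$ adjacent iff $j=k$ or $l=i$. Adding a false twin of a vertex $v$ means adding a new vertex $v'$ with $N(v')=N(v)$. *)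

theory Defs
  imports Main "HOL.Real"
begin

definition graph :: "'a set \<Rightarrow> ('a \<Rightarrow> 'a \<Rightarrow> bool) \<Rightarrow> bool" where
  "graph V E \<longleftrightarrow> finite V \<and> (\<forall>x y. E x y \<longrightarrow> x \<in> V \<and> y \<in> V)
      \<and> (\<forall>x y. E x y \<longrightarrow> E y x) \<and> (\<forall>x. \<not> E x x)"

text \<open>Points of R^d are functions nat => real vanishing at coordinates >= d
  (coordinate 0 corresponds to e_1).  The closed box [lo,hi] and its interior in R^d.\<close>
definition box :: "nat \<Rightarrow> (nat \<Rightarrow> real) \<Rightarrow> (nat \<Rightarrow> real) \<Rightarrow> (nat \<Rightarrow> real) set" where
  "box d lo hi = {x. (\<forall>i<d. lo i \<le> x i \<and> x i \<le> hi i) \<and> (\<forall>i\<ge>d. x i = 0)}"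

definition obox :: "nat \<Rightarrow> (nat \<Rightarrow> real) \<Rightarrow> (nat \<Rightarrow> real) \<Rightarrow> (nat \<Rightarrow> real) set" where
  "obox d lo hi = {x. (\<forall>i<d. lo i < x i \<and> x i < hi i) \<and> (\<forall>i\<ge>d. x i = 0)}"

text \<open>A (d-1)-dimensional box in R^d orthogonal to e_1 (coordinate 0 fixed to c).\<close>
definition facet_box :: "nat \<Rightarrow> (nat \<Rightarrow> real) set \<Rightarrow> bool" where
  "facet_box d S \<longleftrightarrow> (\<exists>c a b. (\<forall>i. 1 \<le> i \<and> i < d \<longrightarrow> a i < b i) \<and>
      S = {x. x 0 = c \<and> (\<forall>i. 1 \<le> i \<and> i < d \<longrightarrow> a i \<le> x i \<and> x i \<le> b i) \<and> (\<forall>i\<ge>d. x i = 0)})"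

definition d_CBU :: "nat \<Rightarrow> 'a set \<Rightarrow> ('a \<Rightarrow> 'a \<Rightarrow> bool) \<Rightarrow> bool" where
  "d_CBU d V E \<longleftrightarrow> d \<ge> 1 \<and> (\<exists>lo hi :: 'a \<Rightarrow> nat \<Rightarrow> real.
     (\<forall>v\<in>V. \<forall>i<d. lo v i < hi v i) \<and>
     (\<forall>u\<in>V. \<forall>v\<in>V. u \<noteq> v \<longrightarrow> obox d (lo u) (hi u) \<inter> obox d (lo v) (hi v) = {}) \<and>
     (\<forall>u\<in>V. \<forall>v\<in>V. u \<noteq> v \<longrightarrow> (E u v \<longleftrightarrow> box d (lo u) (hi u) \<inter> box d (lo v) (hi v) \<noteq> {})) \<and>
     (\<forall>u\<in>V. \<forall>v\<in>V. u \<noteq> v \<longrightarrow> box d (lo u) (hi u) \<inter> box d (lo v) (hi v) \<noteq> {} \<longrightarrow>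
        facet_box d (box d (lo u) (hi u) \<inter> box d (lo v) (hi v))))"

definition CBU :: "'a set \<Rightarrow> ('a \<Rightarrow> 'a \<Rightarrow> bool) \<Rightarrow> bool" where
  "CBU V E \<longleftrightarrow> (\<exists>d\<ge>1. d_CBU d V E)"

definition acyclic_orientation :: "'a set \<Rightarrow> ('a \<Rightarrow> 'a \<Rightarrow> bool) \<Rightarrow> ('a \<times> 'a) set \<Rightarrow> bool" where
  "acyclic_orientation V E D \<longleftrightarrow>
     (\<forall>u v. (u, v) \<in> D \<longrightarrow> E u v) \<and>
     (\<forall>u v. E u v \<longrightarrow> ((u, v) \<in> D \<longleftrightarrow> (v, u) \<notin> D)) \<and>
     acyclic D"

definition homogeneous_arc_labeling ::
    "'a set \<Rightarrow> ('a \<Rightarrow> 'a \<Rightarrow> bool) \<Rightarrow> ('a \<times> 'a) set \<Rightarrow> ('a \<times> 'a \<Rightarrow> real) \<Rightarrow> bool" where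
  "homogeneous_arc_labeling V E D lab \<longleftrightarrow> acyclic_orientation V E D \<and>
     (\<forall>v\<in>V.
        (\<forall>a\<in>D. \<forall>b\<in>D. fst a = v \<and> fst b = v \<longrightarrow> lab a = lab b) \<and>
        (\<forall>a\<in>D. \<forall>b\<in>D. snd a = v \<and> snd b = v \<longrightarrow> lab a = lab b) \<and>
        (\<forall>a\<in>D. \<forall>b\<in>D. snd a = v \<and> fst b = v \<longrightarrow> lab a < lab b))"

definition has_HAL :: "'a set \<Rightarrow> ('a \<Rightarrow> 'a \<Rightarrow> bool) \<Rightarrow> bool" where
  "has_HAL V E \<longleftrightarrow> (\<exists>D lab. homogeneous_arc_labeling V E D lab)"

definition shift_V :: "nat \<Rightarrow> (nat \<times> nat) set" where
  "shift_V m = {(i, j). 1 \<le> i \<and> i < j \<and> j \<le> m}"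

definition shift_E :: "nat \<Rightarrow> nat \<times> nat \<Rightarrow> nat \<times> nat \<Rightarrow> bool" where
  "shift_E m p q \<longleftrightarrow> p \<in> shift_V m \<and> q \<in> shift_V m \<and> (snd p = fst q \<or> snd q = fst p)"

text \<open>Adding a false twin v' (fresh) of a vertex v.\<close>
definition twin_map :: "'b \<Rightarrow> 'b \<Rightarrow> 'b \<Rightarrow> 'b" where
  "twin_map v v' x = (if x = v' then v else x)"

inductive add_twins :: "'b set \<Rightarrow> ('b \<Rightarrow> 'b \<Rightarrow> bool) \<Rightarrow> nat \<Rightarrow> 'b set \<Rightarrow> ('b \<Rightarrow> 'b \<Rightarrow> bool) \<Rightarrow> bool"
  for V E where
  base: "add_twins V E 0 V E"
| step: "add_twins V E t V1 E1 \<Longrightarrow> v \<in> V1 \<Longrightarrow> v' \<notin> V1 \<Longrightarrow>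
         add_twins V E (Suc t) (insert v' V1) (\<lambda>x y. E1 (twin_map v v' x) (twin_map v v' y))"

definition subgraph_iso :: "'a set \<Rightarrow> ('a \<Rightarrow> 'a \<Rightarrow> bool) \<Rightarrow> 'b set \<Rightarrow> ('b \<Rightarrow> 'b \<Rightarrow> bool) \<Rightarrow> bool" where
  "subgraph_iso V E W F \<longleftrightarrow> (\<exists>f. inj_on f V \<and> f ` V \<subseteq> W \<and>
      (\<forall>u\<in>V. \<forall>v\<in>V. E u v \<longrightarrow> F (f u) (f v)))"

definition twin_shift_sub :: "nat \<Rightarrow> 'a set \<Rightarrow> ('a \<Rightarrow> 'a \<Rightarrow> bool) \<Rightarrow> bool" where
  "twin_shift_sub n V E \<longleftrightarrow> (\<exists>m t W F. m + t \<le> n + 1 \<and>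
      add_twins (shift_V m) (shift_E m) t W F \<and> subgraph_iso V E W F)"

end

theory Submission
  imports Defs
begin


definition pairable :: "'a set \<Rightarrow> ('a \<Rightarrow> 'a \<Rightarrow> bool) \<Rightarrow> bool" where
  "pairable V E \<longleftrightarrow> (\<exists>\<alpha> \<beta> :: 'a \<Rightarrow> real. (\<forall>v\<in>V. \<alpha> v < \<beta> v) \<and>
     (\<forall>u v. E u v \<longrightarrow> \<beta> u = \<alpha> v \<or> \<beta> v = \<alpha> u))"

lemma graphD: assumes "graph V E" "E u v" shows "u \<in> V" "v \<in> V" "E v u" "u \<noteq> v"
  using assms unfolding graph_def by metis+

lemma P2: assumes g: "graph V E" and p: "pairable V E" shows "has_HAL V E"
proof -
  obtain \<alpha> \<beta> :: "'a \<Rightarrow> real" where ab: "\<forall>v\<in>V. \<alpha> v < \<beta> v"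
    and ed: "\<forall>u v. E u v \<longrightarrow> \<beta> u = \<alpha> v \<or> \<beta> v = \<alpha> u"
    using p unfolding pairable_def by blast
  define D where "D = {(u,v). E u v \<and> \<beta> u = \<alpha> v}"
  define lab where "lab = (\<lambda>a::'a\<times>'a. \<beta> (fst a))"
  have tr: "(x,y) \<in> D\<^sup>+ \<Longrightarrow> \<alpha> x < \<alpha> y" for x y
  proof (induction rule: trancl_induct)
    case (base y)
    then show ?case using ab graphD[OF g] unfolding D_def by fastforce
  next
    case (step y z)
    then show ?case using ab graphD[OF g] unfolding D_def by fastforce
  qed
  have acy: "acyclic D" unfolding acyclic_def using tr by blast
  have ori: "acyclic_orientation V E D"
    unfolding acyclic_orientation_def
  proof (intro conjI allI impI acy)
    fix u v assume "(u,v) \<in> D" then show "E u v" unfolding D_def by auto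
  next
    fix u v assume e: "E u v"
    have "u \<in> V" "v \<in> V" "E v u" using graphD[OF g e] by auto
    moreover have "\<beta> u = \<alpha> v \<or> \<beta> v = \<alpha> u" using ed e by blast
    moreover have "\<alpha> u < \<beta> u" "\<alpha> v < \<beta> v" using ab \<open>u \<in> V\<close> \<open>v \<in> V\<close> by auto
    ultimately show "((u, v) \<in> D) = ((v, u) \<notin> D)"
      using e unfolding D_def by auto
  qed
  have h1: "\<forall>v\<in>V. \<forall>a\<in>D. \<forall>b\<in>D. fst a = v \<and> fst b = v \<longrightarrow> lab a = lab b" unfolding lab_def by auto
  have h2: "\<forall>v\<in>V. \<forall>a\<in>D. \<forall>b\<in>D. snd a = v \<and> snd b = v \<longrightarrow> lab a = lab b" unfolding lab_def D_def by auto
  have h3: "\<forall>v\<in>V. \<forall>a\<in>D. \<forall>b\<in>D. snd a = v \<and> fst b = v \<longrightarrow> lab a < lab b" unfolding lab_def D_def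
    using ab by auto
  have "homogeneous_arc_labeling V E D lab"
    unfolding homogeneous_arc_labeling_def using ori h1 h2 h3 by blast
  then show ?thesis unfolding has_HAL_def by blast
qed

lemma P1: assumes g: "graph V E" and h: "has_HAL V E" shows "pairable V E"
proof -
  obtain D lab where hal: "homogeneous_arc_labeling V E D lab" using h unfolding has_HAL_def by blast
  have ori: "acyclic_orientation V E D" using hal unfolding homogeneous_arc_labeling_def by blast
  have c1: "\<And>v a b. v \<in> V \<Longrightarrow> a \<in> D \<Longrightarrow> b \<in> D \<Longrightarrow> fst a = v \<Longrightarrow> fst b = v \<Longrightarrow> lab a = lab b"
   and c2: "\<And>v a b. v \<in> V \<Longrightarrow> a \<in> D \<Longrightarrow> b \<in> D \<Longrightarrow> snd a = v \<Longrightarrow> snd b = v \<Longrightarrow> lab a = lab b"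
   and c3: "\<And>v a b. v \<in> V \<Longrightarrow> a \<in> D \<Longrightarrow> b \<in> D \<Longrightarrow> snd a = v \<Longrightarrow> fst b = v \<Longrightarrow> lab a < lab b"
    using hal unfolding homogeneous_arc_labeling_def by blast+
  have DE: "\<And>u v. (u,v) \<in> D \<Longrightarrow> E u v" and DD: "\<And>u v. E u v \<Longrightarrow> (u,v) \<in> D \<or> (v,u) \<in> D"
    using ori unfolding acyclic_orientation_def by blast+
  define outl where "outl v = lab (SOME a. a \<in> D \<and> fst a = v)" for v
  define inl where "inl v = lab (SOME a. a \<in> D \<and> snd a = v)" for v
  define \<beta> where "\<beta> v = (if \<exists>a\<in>D. fst a = v then outl v else if \<exists>a\<in>D. snd a = v then inl v + 1 else 1)" for v
  define \<alpha> where "\<alpha> v = (if \<exists>a\<in>D. snd a = v then inl v else \<beta> v - 1)" for v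
  have outl: "outl v = lab a" if "a \<in> D" "fst a = v" "v \<in> V" for a v
  proof -
    have "(SOME a. a \<in> D \<and> fst a = v) \<in> D \<and> fst (SOME a. a \<in> D \<and> fst a = v) = v"
      using that by (metis (mono_tags, lifting) someI)
    then show ?thesis unfolding outl_def using c1 that by metis
  qed
  have inl: "inl v = lab a" if "a \<in> D" "snd a = v" "v \<in> V" for a v
  proof -
    have "(SOME a. a \<in> D \<and> snd a = v) \<in> D \<and> snd (SOME a. a \<in> D \<and> snd a = v) = v"
      using that by (metis (mono_tags, lifting) someI)
    then show ?thesis unfolding inl_def using c2 that by metis
  qed
  have ab: "\<forall>v\<in>V. \<alpha> v < \<beta> v"
  proof
    fix v assume v: "v \<in> V"
    show "\<alpha> v < \<beta> v"
    proof (cases "\<exists>a\<in>D. snd a = v")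
      case True
      then obtain a where a: "a \<in> D" "snd a = v" by blast
      show ?thesis
      proof (cases "\<exists>b\<in>D. fst b = v")
        case True
        then obtain b where b: "b \<in> D" "fst b = v" by blast
        show ?thesis using a b v c3[OF v a(1) b(1) a(2) b(2)] outl[OF b v] inl[OF a v]
          unfolding \<alpha>_def \<beta>_def by auto
      qed (auto simp: \<alpha>_def \<beta>_def)
    qed (auto simp: \<alpha>_def \<beta>_def)
  qed
  have ed: "\<forall>u v. E u v \<longrightarrow> \<beta> u = \<alpha> v \<or> \<beta> v = \<alpha> u"
  proof (intro allI impI)
    fix u v assume e: "E u v"
    have uv: "u \<in> V" "v \<in> V" using graphD[OF g e] by auto
    have *: "\<beta> x = \<alpha> y" if "(x,y) \<in> D" "x \<in> V" "y \<in> V" for x y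
    proof -
      have "\<beta> x = lab (x,y)" using outl[of "(x,y)" x] that unfolding \<beta>_def by force
      moreover have "\<alpha> y = lab (x,y)" using inl[of "(x,y)" y] that unfolding \<alpha>_def by force
      ultimately show ?thesis by simp
    qed
    show "\<beta> u = \<alpha> v \<or> \<beta> v = \<alpha> u" using DD[OF e] * uv by blast
  qed
  show ?thesis unfolding pairable_def using ab ed by blast
qed

lemma twins_pairable:
  fixes \<alpha> \<beta> :: "_ \<Rightarrow> real"
  assumes "add_twins V0 E0 t W F"
  shows "(\<forall>v\<in>V0. \<alpha> v < \<beta> v) \<Longrightarrow> (\<forall>u v. E0 u v \<longrightarrow> \<beta> u = \<alpha> v \<or> \<beta> v = \<alpha> u) \<Longrightarrow>
    \<exists>\<alpha>' \<beta>' :: _ \<Rightarrow> real. (\<forall>v\<in>W. \<alpha>' v < \<beta>' v) \<and> (\<forall>u v. F u v \<longrightarrow> \<beta>' u = \<alpha>' v \<or> \<beta>' v = \<alpha>' u)"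
  using assms
proof (induction rule: add_twins.induct)
  case base
  then show ?case by blast
next
  case (step t V1 E1 v v')
  then obtain \<alpha>' \<beta>' :: "_ \<Rightarrow> real" where a: "\<forall>v\<in>V1. \<alpha>' v < \<beta>' v"
    and b: "\<forall>u v. E1 u v \<longrightarrow> \<beta>' u = \<alpha>' v \<or> \<beta>' v = \<alpha>' u" by blast
  show ?case
    apply (rule exI[of _ "\<lambda>x. \<alpha>' (twin_map v v' x)"], rule exI[of _ "\<lambda>x. \<beta>' (twin_map v v' x)"])
    using a b step.hyps by (auto simp: twin_map_def)
qed

lemma shift_pairable:
  "\<forall>v\<in>shift_V m. real (fst v) < real (snd v)"
  "\<forall>u v. shift_E m u v \<longrightarrow> real (snd u) = real (fst v) \<or> real (snd v) = real (fst u)"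
  by (auto simp: shift_V_def shift_E_def)

lemma P7: assumes g: "graph V E" and t: "twin_shift_sub n V E" shows "pairable V E"
proof -
  obtain m t W F where tw: "add_twins (shift_V m) (shift_E m) t W F" and s: "subgraph_iso V E W F"
    using t unfolding twin_shift_sub_def by blast
  obtain \<alpha> \<beta> :: "_ \<Rightarrow> real" where a: "\<forall>v\<in>W. \<alpha> v < \<beta> v"
    and b: "\<forall>u v. F u v \<longrightarrow> \<beta> u = \<alpha> v \<or> \<beta> v = \<alpha> u"
    using twins_pairable[OF tw shift_pairable] by blast
  obtain f where f: "f ` V \<subseteq> W" "\<forall>u\<in>V. \<forall>v\<in>V. E u v \<longrightarrow> F (f u) (f v)"
    using s unfolding subgraph_iso_def by blast
  show ?thesis unfolding pairable_def
    apply (rule exI[of _ "\<alpha> \<circ> f"], rule exI[of _ "\<beta> \<circ> f"])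
  proof (intro conjI ballI allI impI)
    fix v assume "v \<in> V" then show "(\<alpha> \<circ> f) v < (\<beta> \<circ> f) v" using a f by auto
  next
    fix u v assume e: "E u v"
    then have "F (f u) (f v)" using f graphD[OF g e] by blast
    then show "(\<beta> \<circ> f) u = (\<alpha> \<circ> f) v \<or> (\<beta> \<circ> f) v = (\<alpha> \<circ> f) u" using b by (simp only: comp_apply)
  qed
qed


lemma box_Int: "box d l1 h1 \<inter> box d l2 h2 = box d (\<lambda>i. max (l1 i) (l2 i)) (\<lambda>i. min (h1 i) (h2 i))"
  by (auto simp: box_def)

lemma box_ne: "box d l h \<noteq> {} \<longleftrightarrow> (\<forall>i<d. l i \<le> h i)"
proof
  assume "box d l h \<noteq> {}" then obtain x where "x \<in> box d l h" by blast
  then show "\<forall>i<d. l i \<le> h i" unfolding box_def by fastforce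
next
  assume a: "\<forall>i<d. l i \<le> h i"
  have "(\<lambda>i. if i < d then l i else 0) \<in> box d l h" using a by (auto simp: box_def)
  then show "box d l h \<noteq> {}" by blast
qed
lemma box_upd0: "z \<in> box d l h \<Longrightarrow> 0 < d \<Longrightarrow> l 0 \<le> a \<Longrightarrow> a \<le> h 0 \<Longrightarrow> z(0 := a) \<in> box d l h"
  by (auto simp: box_def)
lemma P3: assumes g: "graph V E" and c: "CBU V E" shows "pairable V E"
proof -
  obtain d where d: "d \<ge> 1" "d_CBU d V E" using c unfolding CBU_def by blast
  obtain lo hi :: "'a \<Rightarrow> nat \<Rightarrow> real" where
    lh: "\<forall>v\<in>V. \<forall>i<d. lo v i < hi v i" and
    ob: "\<forall>u\<in>V. \<forall>v\<in>V. u \<noteq> v \<longrightarrow> obox d (lo u) (hi u) \<inter> obox d (lo v) (hi v) = {}" and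
    ad: "\<forall>u\<in>V. \<forall>v\<in>V. u \<noteq> v \<longrightarrow> (E u v \<longleftrightarrow> box d (lo u) (hi u) \<inter> box d (lo v) (hi v) \<noteq> {})" and
    fb: "\<forall>u\<in>V. \<forall>v\<in>V. u \<noteq> v \<longrightarrow> box d (lo u) (hi u) \<inter> box d (lo v) (hi v) \<noteq> {} \<longrightarrow>
        facet_box d (box d (lo u) (hi u) \<inter> box d (lo v) (hi v))"
    using d(2) unfolding d_CBU_def apply (elim conjE exE) apply (rule that) apply assumption+ done
  have d0: "0 < d" using d by auto
  have ab: "\<forall>v\<in>V. lo v 0 < hi v 0" using lh d0 by blast
  have ed: "hi u 0 = lo v 0 \<or> hi v 0 = lo u 0" if e: "E u v" for u v
  proof (rule ccontr)
    assume nc: "\<not> (hi u 0 = lo v 0 \<or> hi v 0 = lo u 0)"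
    have uv: "u \<in> V" "v \<in> V" "u \<noteq> v" using graphD[OF g e] by auto
    let ?S = "box d (lo u) (hi u) \<inter> box d (lo v) (hi v)"
    have ne: "?S \<noteq> {}" using ad uv e by blast
    have "facet_box d ?S" using fb uv ne by blast
    then obtain c a b where "?S = {x. x 0 = c \<and> (\<forall>i. 1 \<le> i \<and> i < d \<longrightarrow> a i \<le> x i \<and> x i \<le> b i) \<and> (\<forall>i\<ge>d. x i = 0)}"
      unfolding facet_box_def by blast
    then have cS: "\<forall>x\<in>?S. x 0 = c" by simp
    obtain z where z: "z \<in> ?S" using ne by blast
    have z1: "lo u 0 \<le> z 0" "z 0 \<le> hi u 0" "lo v 0 \<le> z 0" "z 0 \<le> hi v 0"
      using z d0 unfolding box_def by blast+
    let ?L = "max (lo u 0) (lo v 0)" and ?H = "min (hi u 0) (hi v 0)"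
    have LH: "?L < ?H" using z1 nc ab uv by (smt (verit))
    have zu: "z \<in> box d (lo u) (hi u)" and zv: "z \<in> box d (lo v) (hi v)" using z by auto
    have m: "lo u 0 \<le> ?L" "lo v 0 \<le> ?L" "?H \<le> hi u 0" "?H \<le> hi v 0" by auto
    have "z(0 := ?L) \<in> box d (lo u) (hi u)" "z(0 := ?L) \<in> box d (lo v) (hi v)"
      "z(0 := ?H) \<in> box d (lo u) (hi u)" "z(0 := ?H) \<in> box d (lo v) (hi v)"
      using box_upd0[OF zu d0] box_upd0[OF zv d0] m LH by force+
    then have "z(0 := ?L) \<in> ?S" "z(0 := ?H) \<in> ?S" by blast+
    then have "(z(0 := ?L)) 0 = c" "(z(0 := ?H)) 0 = c" using cS by blast+
    then show False using LH by simp
  qed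
  show ?thesis unfolding pairable_def
    apply (rule exI[of _ "\<lambda>v. lo v 0"], rule exI[of _ "\<lambda>v. hi v 0"])
    using ab ed by blast
qed

lemma P5: assumes "n \<ge> 1" "d_CBU (2 * n - 1) V E" shows "CBU V E"
proof -
  have "2*n-1 \<ge> 1" using assms(2) unfolding d_CBU_def by (rule conjunct1)
  then show ?thesis unfolding CBU_def using assms(2) by blast
qed


lemma P4: assumes g: "graph V E" and cV: "card V = n" and n1: "n \<ge> 1" and p: "pairable V E"
  shows "d_CBU (2*n-1) V E"
proof -
  obtain \<alpha> \<beta> :: "'a \<Rightarrow> real" where ab: "\<forall>v\<in>V. \<alpha> v < \<beta> v"
    and ed: "\<forall>u v. E u v \<longrightarrow> \<beta> u = \<alpha> v \<or> \<beta> v = \<alpha> u"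
    using p unfolding pairable_def by blast
  have fin: "finite V" using g unfolding graph_def by blast
  obtain h where hb: "bij_betw h V {0..<n}" using ex_bij_betw_finite_nat[OF fin] cV by auto
  define ix where "ix v = Suc (h v)" for v
  have ixinj: "inj_on ix V" using bij_betw_imp_inj_on[OF hb] unfolding inj_on_def ix_def by simp
  have ixr: "1 \<le> ix v \<and> ix v \<le> n" if "v \<in> V" for v
    using bij_betw_apply[OF hb that] unfolding ix_def by auto
  define w where "w i = inv_into V ix i" for i
  have wix: "w (ix v) = v" if "v \<in> V" for v unfolding w_def using inv_into_f_f[OF ixinj that] .
  define d where "d = 2*n-1"
  have d0: "0 < d" using n1 unfolding d_def by simp
  define lo where "lo v i = (if i = 0 then \<alpha> v else if i \<in> ix`V then (if v = w i \<or> E v (w i) then 0 else 2) else (0::real))" for v i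
  define hi where "hi v i = (if i = 0 then \<beta> v else if i \<in> ix`V then (if v = w i then 1 else 3) else (1::real))" for v i
  have two: "ix u < d" if "u \<in> V" "v \<in> V" "u \<noteq> v" for u v
  proof -
    have "card {u, v} \<le> card V" using that fin by (intro card_mono) auto
    then have "n \<ge> 2" using that cV by simp
    then show ?thesis using ixr[OF that(1)] unfolding d_def by linarith
  qed
  have sep: "hi u (ix u) = 1 \<and> lo v (ix u) = 2" if "u \<in> V" "v \<in> V" "u \<noteq> v" "\<not> E u v" for u v
  proof -
    have "ix u \<noteq> 0" using ixr[OF that(1)] by simp
    moreover have "\<not> E v u" using that graphD[OF g, of v u] by blast
    ultimately show ?thesis unfolding lo_def hi_def using wix[OF that(1)] that by auto
  qed
  have K4: "max (lo u i) (lo v i) < min (hi u i) (hi v i)" if e: "E u v" and i: "i \<noteq> 0" for u v i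
  proof -
    have uv: "u \<in> V" "v \<in> V" "u \<noteq> v" "E v u" using graphD[OF g e] by auto
    show ?thesis
    proof (cases "i \<in> ix`V")
      case True
      show ?thesis
      proof (cases "u = w i")
        case True
        then show ?thesis using uv \<open>i \<in> ix`V\<close> i unfolding lo_def hi_def by auto
      next
        case False
        show ?thesis
        proof (cases "v = w i")
          case True
          then show ?thesis using uv \<open>i \<in> ix`V\<close> i e unfolding lo_def hi_def by auto
        next
          case False
          then show ?thesis using uv \<open>i \<in> ix`V\<close> i \<open>u \<noteq> w i\<close> unfolding lo_def hi_def by auto
        qed
      qed
    next
      case False
      then show ?thesis using i unfolding lo_def hi_def by auto
    qed
  qed
  have K5: "max (lo u 0) (lo v 0) = min (hi u 0) (hi v 0)" if e: "E u v" for u v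
  proof -
    have uv: "u \<in> V" "v \<in> V" using graphD[OF g e] by auto
    have "\<alpha> u < \<beta> u" "\<alpha> v < \<beta> v" using ab uv by auto
    moreover have "\<beta> u = \<alpha> v \<or> \<beta> v = \<alpha> u" using ed e by blast
    ultimately show ?thesis unfolding lo_def hi_def by auto
  qed
  have lh: "\<forall>v\<in>V. \<forall>i<d. lo v i < hi v i" using ab unfolding lo_def hi_def by auto
  have ob: "\<forall>u\<in>V. \<forall>v\<in>V. u \<noteq> v \<longrightarrow> obox d (lo u) (hi u) \<inter> obox d (lo v) (hi v) = {}"
  proof (intro ballI impI)
    fix u v assume u: "u \<in> V" and v: "v \<in> V" and uv: "u \<noteq> v"
    show "obox d (lo u) (hi u) \<inter> obox d (lo v) (hi v) = {}"
    proof (rule ccontr)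
      assume "obox d (lo u) (hi u) \<inter> obox d (lo v) (hi v) \<noteq> {}"
      then obtain x where xu: "x \<in> obox d (lo u) (hi u)" and xv: "x \<in> obox d (lo v) (hi v)" by blast
      have xi: "lo u i < x i \<and> x i < hi u i" "lo v i < x i \<and> x i < hi v i" if "i < d" for i
        using xu xv that unfolding obox_def by blast+
      show False
      proof (cases "E u v")
        case True
        then have "\<beta> u = \<alpha> v \<or> \<beta> v = \<alpha> u" using ed by blast
        then show False using xi[OF d0] unfolding lo_def hi_def by auto
      next
        case False
        have "x (ix u) < 1" "2 < x (ix u)" using xi[OF two[OF u v uv]] sep[OF u v uv False] by auto
        then show False by simp
      qed
    qed
  qed
  have adj: "E u v \<longleftrightarrow> box d (lo u) (hi u) \<inter> box d (lo v) (hi v) \<noteq> {}"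
    if u: "u \<in> V" and v: "v \<in> V" and uv: "u \<noteq> v" for u v
    unfolding box_Int box_ne
  proof
    assume e: "E u v"
    show "\<forall>i<d. max (lo u i) (lo v i) \<le> min (hi u i) (hi v i)"
    proof (intro allI impI)
      fix i assume "i < d"
      show "max (lo u i) (lo v i) \<le> min (hi u i) (hi v i)"
        using K5[OF e] K4[OF e, of i] by (cases "i = 0") auto
    qed
  next
    assume a: "\<forall>i<d. max (lo u i) (lo v i) \<le> min (hi u i) (hi v i)"
    show "E u v"
    proof (rule ccontr)
      assume ne: "\<not> E u v"
      have "max (lo u (ix u)) (lo v (ix u)) \<le> min (hi u (ix u)) (hi v (ix u))"
        using a two[OF u v uv] by blast
      then show False using sep[OF u v uv ne] by auto
    qed
  qed
  have fac: "facet_box d (box d (lo u) (hi u) \<inter> box d (lo v) (hi v))"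
    if u: "u \<in> V" and v: "v \<in> V" and uv: "u \<noteq> v"
      and ne: "box d (lo u) (hi u) \<inter> box d (lo v) (hi v) \<noteq> {}" for u v
  proof -
    have e: "E u v" using adj[OF u v uv] ne by blast
    define L where "L i = max (lo u i) (lo v i)" for i
    define H where "H i = min (hi u i) (hi v i)" for i
    have LH: "\<forall>i. 1 \<le> i \<and> i < d \<longrightarrow> L i < H i" using K4[OF e] unfolding L_def H_def by auto
    have L0: "L 0 = H 0" using K5[OF e] unfolding L_def H_def by simp
    have "box d L H = {x. x 0 = L 0 \<and> (\<forall>i. 1 \<le> i \<and> i < d \<longrightarrow> L i \<le> x i \<and> x i \<le> H i) \<and> (\<forall>i\<ge>d. x i = 0)}"
    proof (rule set_eqI, rule iffI)
      fix x assume x: "x \<in> box d L H"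
      then have "L 0 \<le> x 0" "x 0 \<le> H 0" using d0 unfolding box_def by auto
      then show "x \<in> {x. x 0 = L 0 \<and> (\<forall>i. 1 \<le> i \<and> i < d \<longrightarrow> L i \<le> x i \<and> x i \<le> H i) \<and> (\<forall>i\<ge>d. x i = 0)}"
        using x L0 unfolding box_def by auto
    next
      fix x assume x: "x \<in> {x. x 0 = L 0 \<and> (\<forall>i. 1 \<le> i \<and> i < d \<longrightarrow> L i \<le> x i \<and> x i \<le> H i) \<and> (\<forall>i\<ge>d. x i = 0)}"
      have "L i \<le> x i \<and> x i \<le> H i" if "i < d" for i
      proof (cases "i = 0")
        case True then show ?thesis using x L0 by auto
      next
        case False then show ?thesis using x that by auto
      qed
      then show "x \<in> box d L H" using x unfolding box_def by auto
    qed
    then show ?thesis unfolding box_Int facet_box_def L_def[symmetric] H_def[symmetric]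
      using LH by blast
  qed
  have "d_CBU d V E"
    unfolding d_CBU_def
    apply (rule conjI)
    using d0 apply simp
    apply (rule exI[of _ lo], rule exI[of _ hi])
    using lh ob adj fac by blast
  then show ?thesis unfolding d_def .
qed



lemma twins_build:
  fixes S :: "'b set" and E0 :: "'b \<Rightarrow> 'b \<Rightarrow> bool"
  assumes "finite X"
  shows "X \<inter> S = {} \<Longrightarrow> (\<forall>x\<in>X. \<pi> x \<in> S) \<Longrightarrow>
    \<exists>F. add_twins S E0 (card X) (S \<union> X) F \<and>
      (\<forall>x\<in>S \<union> X. \<forall>y\<in>S \<union> X. F x y = E0 (if x \<in> S then x else \<pi> x) (if y \<in> S then y else \<pi> y))"
  using assms
proof (induction X rule: finite_induct)
  case empty
  show ?case using add_twins.base[of S E0] by auto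
next
  case (insert x X)
  then obtain F where F: "add_twins S E0 (card X) (S \<union> X) F"
    and Fe: "\<forall>a\<in>S \<union> X. \<forall>b\<in>S \<union> X. F a b = E0 (if a \<in> S then a else \<pi> a) (if b \<in> S then b else \<pi> b)"
    by blast
  have px: "\<pi> x \<in> S \<union> X" using insert by auto
  have xn: "x \<notin> S \<union> X" using insert by auto
  have st: "add_twins S E0 (Suc (card X)) (insert x (S \<union> X)) (\<lambda>a b. F (twin_map (\<pi> x) x a) (twin_map (\<pi> x) x b))"
    by (rule add_twins.step[OF F px xn])
  have c: "card (insert x X) = Suc (card X)" using insert by simp
  have s: "insert x (S \<union> X) = S \<union> insert x X" by auto
  have tm: "twin_map (\<pi> x) x a \<in> S \<union> X \<and>
     (if twin_map (\<pi> x) x a \<in> S then twin_map (\<pi> x) x a else \<pi> (twin_map (\<pi> x) x a)) = (if a \<in> S then a else \<pi> a)"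
    if "a \<in> S \<union> insert x X" for a
    using that insert by (auto simp: twin_map_def)
  show ?case
    apply (rule exI[of _ "\<lambda>a b. F (twin_map (\<pi> x) x a) (twin_map (\<pi> x) x b)"])
    using st tm Fe unfolding c s by auto
qed

lemma P6: assumes g: "graph V E" and cV: "card V = n" and n1: "n \<ge> 1" and p: "pairable V E"
  shows "twin_shift_sub n V E"
proof -
  obtain \<alpha> \<beta> :: "'a \<Rightarrow> real" where ab: "\<forall>v\<in>V. \<alpha> v < \<beta> v"
    and ed: "\<forall>u v. E u v \<longrightarrow> \<beta> u = \<alpha> v \<or> \<beta> v = \<alpha> u"
    using p unfolding pairable_def by blast
  have fin: "finite V" using g unfolding graph_def by blast
  have Vne: "V \<noteq> {}" using cV n1 by auto
  define \<mu> where "\<mu> = Min (\<alpha> ` V)"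
  have mu: "\<mu> \<le> \<alpha> v" if "v \<in> V" for v unfolding \<mu>_def using fin that by auto
  define \<alpha>' where "\<alpha>' v = (if \<alpha> v \<in> \<beta> ` V then \<alpha> v else \<mu>)" for v
  have ab': "\<alpha>' v < \<beta> v" if "v \<in> V" for v using ab mu[OF that] that unfolding \<alpha>'_def by force
  have ed': "\<beta> u = \<alpha>' v \<or> \<beta> v = \<alpha>' u" if e: "E u v" for u v
  proof -
    have uv: "u \<in> V" "v \<in> V" using graphD[OF g e] by auto
    from ed e have "\<beta> u = \<alpha> v \<or> \<beta> v = \<alpha> u" by blast
    then show ?thesis
    proof
      assume h: "\<beta> u = \<alpha> v"
      then have "\<alpha> v \<in> \<beta> ` V" using uv by (metis imageI)
      then show ?thesis using h unfolding \<alpha>'_def by simp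
    next
      assume h: "\<beta> v = \<alpha> u"
      then have "\<alpha> u \<in> \<beta> ` V" using uv by (metis imageI)
      then show ?thesis using h unfolding \<alpha>'_def by simp
    qed
  qed
  define \<Lambda> where "\<Lambda> = \<alpha>' ` V \<union> \<beta> ` V"
  have finL: "finite \<Lambda>" unfolding \<Lambda>_def using fin by simp
  define m where "m = card \<Lambda>"
  define rk where "rk x = card {y\<in>\<Lambda>. y \<le> x}" for x
  have rk1: "1 \<le> rk x \<and> rk x \<le> m" if "x \<in> \<Lambda>" for x
  proof -
    have "{y\<in>\<Lambda>. y \<le> x} \<noteq> {}" using that by auto
    then have "card {y\<in>\<Lambda>. y \<le> x} \<noteq> 0" using finL by simp
    moreover have "card {y\<in>\<Lambda>. y \<le> x} \<le> m" unfolding m_def using finL by (intro card_mono) auto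
    ultimately show ?thesis unfolding rk_def by simp
  qed
  have rklt: "rk x < rk y" if "x \<in> \<Lambda>" "y \<in> \<Lambda>" "x < y" for x y
  proof -
    have "y \<in> {z\<in>\<Lambda>. z \<le> y}" "y \<notin> {z\<in>\<Lambda>. z \<le> x}" using that by auto
    moreover have "{z\<in>\<Lambda>. z \<le> x} \<subseteq> {z\<in>\<Lambda>. z \<le> y}" using that by auto
    ultimately have "{z\<in>\<Lambda>. z \<le> x} \<subset> {z\<in>\<Lambda>. z \<le> y}" by blast
    then show ?thesis unfolding rk_def using finL by (intro psubset_card_mono) auto
  qed
  have rkinj: "inj_on rk \<Lambda>"
  proof (rule inj_onI)
    fix x y assume "x \<in> \<Lambda>" "y \<in> \<Lambda>" "rk x = rk y"
    then show "x = y" using rklt by (metis less_irrefl linorder_neqE_linordered_idom)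
  qed
  define gg where "gg v = (rk (\<alpha>' v), rk (\<beta> v))" for v
  have ggS: "gg v \<in> shift_V m" if "v \<in> V" for v
  proof -
    have "\<alpha>' v \<in> \<Lambda>" "\<beta> v \<in> \<Lambda>" using that unfolding \<Lambda>_def by auto
    then show ?thesis using rk1 rklt ab'[OF that] unfolding gg_def shift_V_def by auto
  qed
  have ggE: "shift_E m (gg u) (gg v)" if e: "E u v" for u v
  proof -
    have uv: "u \<in> V" "v \<in> V" using graphD[OF g e] by auto
    show ?thesis unfolding shift_E_def using ggS[OF uv(1)] ggS[OF uv(2)] ed'[OF e]
      unfolding gg_def by auto
  qed
  define P where "P = gg ` V"
  define p where "p = card P"
  have pn: "p \<le> n" unfolding p_def P_def using cV card_image_le[OF fin] by metis
  have mp: "m \<le> p + 1"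
  proof -
    have "\<Lambda> \<subseteq> insert \<mu> (\<beta> ` V)" unfolding \<Lambda>_def \<alpha>'_def by auto
    then have "m \<le> card (insert \<mu> (\<beta> ` V))" unfolding m_def using fin by (intro card_mono) auto
    also have "\<dots> \<le> card (\<beta> ` V) + 1" using fin by (simp add: card_insert_if)
    also have "card (\<beta> ` V) = card (rk ` \<beta> ` V)"
      using card_image[OF inj_on_subset[OF rkinj]] unfolding \<Lambda>_def by auto
    also have "rk ` \<beta> ` V = snd ` P" unfolding P_def gg_def by force
    also have "card (snd ` P) \<le> p" unfolding p_def P_def using fin by (intro card_image_le) auto
    finally show ?thesis by simp
  qed
  define rep where "rep q = (SOME v. v \<in> V \<and> gg v = q)" for q
  have rep: "rep q \<in> V \<and> gg (rep q) = q" if "q \<in> P" for q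
    using that unfolding P_def rep_def by (metis (mono_tags, lifting) imageE someI)
  define R where "R = rep ` P"
  have RV: "R \<subseteq> V" unfolding R_def using rep by auto
  have cR: "card R = p" unfolding R_def p_def
    by (rule card_image) (metis inj_onI rep)
  have Rrep: "v = rep (gg v)" if "v \<in> R" for v
    using that rep unfolding R_def by auto
  define NR where "NR = V - R"
  have cNR: "card NR = n - p" unfolding NR_def using card_Diff_subset[OF finite_subset[OF RV fin] RV] cV cR by simp
  obtain hh where hb: "bij_betw hh NR {0..<card NR}"
    using ex_bij_betw_finite_nat[of NR] fin unfolding NR_def by auto
  define t where "t = card NR"
  define X where "X = (\<lambda>k. (0::nat, k)) ` {0..<t}"
  have cX: "card X = t" unfolding X_def by (subst card_image) (auto simp: inj_on_def)
  define \<pi> where "\<pi> x = gg (inv_into NR hh (snd x))" for x :: "nat \<times> nat"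
  have XS: "X \<inter> shift_V m = {}" unfolding X_def shift_V_def by auto
  have piS: "\<forall>x\<in>X. \<pi> x \<in> shift_V m"
  proof
    fix x assume "x \<in> X"
    then have "snd x \<in> hh ` NR" using hb unfolding X_def t_def bij_betw_def by auto
    then have "inv_into NR hh (snd x) \<in> NR" by (rule inv_into_into)
    then show "\<pi> x \<in> shift_V m" unfolding \<pi>_def NR_def using ggS by auto
  qed
  obtain F where F: "add_twins (shift_V m) (shift_E m) (card X) (shift_V m \<union> X) F"
    and Fe: "\<forall>x\<in>shift_V m \<union> X. \<forall>y\<in>shift_V m \<union> X.
       F x y = shift_E m (if x \<in> shift_V m then x else \<pi> x) (if y \<in> shift_V m then y else \<pi> y)"
    using twins_build[of X "shift_V m" \<pi> "shift_E m"] XS piS unfolding X_def by auto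
  define f where "f v = (if v \<in> R then gg v else (0, hh v))" for v
  have hhinj: "inj_on hh NR" using hb bij_betw_imp_inj_on by blast
  have fW: "f v \<in> shift_V m \<union> X" if "v \<in> V" for v
  proof (cases "v \<in> R")
    case True then show ?thesis unfolding f_def using ggS that by auto
  next
    case False
    then have "v \<in> NR" using that unfolding NR_def by auto
    then have "hh v < t" using bij_betw_apply[OF hb] unfolding t_def by auto
    then show ?thesis using False unfolding f_def X_def by auto
  qed
  have fpr: "(if f v \<in> shift_V m then f v else \<pi> (f v)) = gg v" if "v \<in> V" for v
  proof (cases "v \<in> R")
    case True then show ?thesis unfolding f_def using ggS that by auto
  next
    case False
    then have "v \<in> NR" using that unfolding NR_def by auto
    moreover have "(0, hh v) \<notin> shift_V m" unfolding shift_V_def by auto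
    ultimately show ?thesis using False inv_into_f_f[OF hhinj] unfolding f_def \<pi>_def by auto
  qed
  have finj: "inj_on f V"
  proof (rule inj_onI)
    fix u v assume u: "u \<in> V" and v: "v \<in> V" and fe: "f u = f v"
    show "u = v"
    proof (cases "u \<in> R")
      case True
      show ?thesis
      proof (cases "v \<in> R")
        case True
        then show ?thesis using \<open>u \<in> R\<close> fe Rrep unfolding f_def by metis
      next
        case False
        have "fst (gg u) \<ge> 1" using ggS[OF u] unfolding shift_V_def by auto
        then show ?thesis using fe \<open>u \<in> R\<close> False unfolding f_def by auto
      qed
    next
      case False
      show ?thesis
      proof (cases "v \<in> R")
        case True
        have "fst (gg v) \<ge> 1" using ggS[OF v] unfolding shift_V_def by auto
        moreover have "fst (f v) = fst (gg v)" "fst (f u) = 0" using \<open>v \<in> R\<close> \<open>u \<notin> R\<close> unfolding f_def by auto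
        ultimately show ?thesis using fe by simp
      next
        case False
        then have "hh u = hh v" using fe \<open>u \<notin> R\<close> unfolding f_def by auto
        moreover have "u \<in> NR" "v \<in> NR" using u v False \<open>u \<notin> R\<close> unfolding NR_def by auto
        ultimately show ?thesis using hhinj inj_onD by metis
      qed
    qed
  qed
  have sub: "subgraph_iso V E (shift_V m \<union> X) F"
    unfolding subgraph_iso_def
  proof (intro exI conjI ballI impI)
    show "inj_on f V" by (rule finj)
    show "f ` V \<subseteq> shift_V m \<union> X" using fW by (simp add: image_subset_iff)
  next
    fix u v assume u: "u \<in> V" and v: "v \<in> V" and e: "E u v"
    show "F (f u) (f v)" using Fe fW[OF u] fW[OF v] fpr[OF u] fpr[OF v] ggE[OF e] by simp
  qed
  have "m + card X \<le> n + 1" using mp pn cX cNR unfolding t_def by linarith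
  then show ?thesis unfolding twin_shift_sub_def using F sub by blast
qed


theorem mainTheorem12:
  fixes V :: "'a set" and E :: "'a \<Rightarrow> 'a \<Rightarrow> bool" and n :: nat
  assumes "graph V E" and "card V = n" and "n \<ge> 1"
  shows "(CBU V E \<longleftrightarrow> has_HAL V E) \<and> (has_HAL V E \<longleftrightarrow> twin_shift_sub n V E)
         \<and> (twin_shift_sub n V E \<longleftrightarrow> d_CBU (2 * n - 1) V E)"
proof -
  note g = assms(1) and c = assms(2) and n = assms(3)
  have 1: "pairable V E \<longleftrightarrow> CBU V E" using P3[OF g] P4[OF g c n] P5[OF n] by blast
  have 2: "pairable V E \<longleftrightarrow> has_HAL V E" using P1[OF g] P2[OF g] by blast
  have 3: "pairable V E \<longleftrightarrow> twin_shift_sub n V E" using P6[OF g c n] P7[OF g] by blast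
  have 4: "pairable V E \<longleftrightarrow> d_CBU (2 * n - 1) V E" using P4[OF g c n] P5[OF n] P3[OF g] by blast
  show ?thesis using 1 2 3 4 by blast
qed

end
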